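(* Let $\mathbb{F}$ be a finite field with $q=p^k\geq 4$ elements ($p$ prime), and let $\Gamma$ be a connected finite graph with vertex set $V$ and edge set $E$, each edge $e$ being oriented with initial vertex $e(0)$ and terminal vertex $e(1)$. Assume $|V|\leq |E|$. Then $\Gamma$ is $\mathbb{F}$-colorable if and only if $A_\Gamma\in \mathbf{C}$, i.e. if and only if there exists a map $\alpha:E\to \mathbb{F}\setminus\{0,-1\}$ such that the $|V|\times|E|$ matrix $\pi_\alpha(A_\Gamma)=[A_\Gamma(v,e,\alpha(e))]_{v\in V,e\in E}$ has rank less than $\min(|E|,|V|)$.
   Context: An $\mathbb{F}$-coloring of $\Gamma$ is a map $V\to\mathbb{F}^{*}=\mathbb{F}\setminus\{0\}$ such that no two adjacent vertices receive the same value; $\Gamma$ is $\mathbb{F}$-colorable if it has one. The array $A_\Gamma\in\mathbb{F}^{|V|\cdot|E|\cdot(q-1)}$ is indexed by $(v,e,c)$ with $v\in V$, $e\in E$, $c\in\mathbb{F}\setminus\{0\}$, and defined by $A_\Gamma(v,e,c)=1$ if $v=e(0)$, $A_\Gamma(v,e,c)=c$ if $v=e(1)$, and $A_\Gamma(v,e,c)=0$ otherwise. For $\alpha:E\to\mathbb{F}\setminus\{0,-1\}$, $\pi_\alpha$ sends an array $A$ indexed by $(v,e,c)$ to the $|V|\times|E|$ matrix $[A(v,e,\alpha(e))]_{v,e}$. Let $\mathbf{D}$ be the determinantal variety of $|V|\times|E|$ matrices of rank $<\min(|E|,|V|)$, $\mathbf{D}_\alpha=\pi_\alpha^{*}\mathbf{D}$,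 and the coloring variety $\mathbf{C}=\bigcup_\alpha \mathbf{D}_\alpha\subset\mathbb{A}^{|V||E|(q-1)}$, the union over all $\alpha:E\to\mathbb{F}\setminus\{0,-1\}$. *)

theory Defs
  imports "Jordan_Normal_Form.DL_Rank"
begin

(* A finite (multi)graph with vertex set V = {0..<nV} and edge set E = {0..<nE};
   edge e is oriented from src e = e(0) to tgt e = e(1). *)

definition graph_ok :: "nat \<Rightarrow> nat \<Rightarrow> (nat \<Rightarrow> nat) \<Rightarrow> (nat \<Rightarrow> nat) \<Rightarrow> bool" where
  "graph_ok nV nE src tgt \<longleftrightarrow> (\<forall>e<nE. src e < nV \<and> tgt e < nV)"

definition adjacent :: "nat \<Rightarrow> (nat \<Rightarrow> nat) \<Rightarrow> (nat \<Rightarrow> nat) \<Rightarrow> nat \<Rightarrow> nat \<Rightarrow> bool" where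
  "adjacent nE src tgt u v \<longleftrightarrow>
     (\<exists>e<nE. (src e = u \<and> tgt e = v) \<or> (src e = v \<and> tgt e = u))"

definition graph_connected :: "nat \<Rightarrow> nat \<Rightarrow> (nat \<Rightarrow> nat) \<Rightarrow> (nat \<Rightarrow> nat) \<Rightarrow> bool" where
  "graph_connected nV nE src tgt \<longleftrightarrow>
     0 < nV \<and> (\<forall>u<nV. \<forall>v<nV. (adjacent nE src tgt)\<^sup>*\<^sup>* u v)"

definition F_colorable :: "'a::field itself \<Rightarrow> nat \<Rightarrow> nat \<Rightarrow> (nat \<Rightarrow> nat) \<Rightarrow> (nat \<Rightarrow> nat) \<Rightarrow> bool" where
  "F_colorable _ nV nE src tgt \<longleftrightarrow>
     (\<exists>col :: nat \<Rightarrow> 'a. (\<forall>v<nV. col v \<noteq> 0) \<and>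
        (\<forall>u<nV. \<forall>v<nV. adjacent nE src tgt u v \<longrightarrow> col u \<noteq> col v))"

definition A_Gamma :: "(nat \<Rightarrow> nat) \<Rightarrow> (nat \<Rightarrow> nat) \<Rightarrow> nat \<Rightarrow> nat \<Rightarrow> 'a::field \<Rightarrow> 'a" where
  "A_Gamma src tgt v e c = (if v = src e then 1 else if v = tgt e then c else 0)"

definition pi_alpha :: "nat \<Rightarrow> nat \<Rightarrow> (nat \<Rightarrow> 'a) \<Rightarrow> (nat \<Rightarrow> nat \<Rightarrow> 'a \<Rightarrow> 'a) \<Rightarrow> 'a mat" where
  "pi_alpha nV nE \<alpha> A = mat nV nE (\<lambda>(v, e). A v e (\<alpha> e))"

end

theory Submission imports Defs begin

lemma (in vec_space) maxS_exists:
  assumes "A \<in> carrier_mat n m"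
  obtains S where "maximal S (\<lambda>T. T \<subseteq> set (cols A) \<and> lin_indpt T)" "finite S"
proof -
  have "lin_indpt {}"
    by (metis (no_types) empty_subsetI fin_dim finite_basis_exists subset_li_is_li vec_vs vectorspace.basis_def)
  then show ?thesis
    using maximal_exists_superset[of "set (cols A)" "(\<lambda>T. T \<subseteq> set (cols A) \<and> lin_indpt T)" "{}"] that
    by auto
qed

lemma (in vec_space) LA1:
  assumes A: "A \<in> carrier_mat n m" and y: "y \<in> carrier_vec n" and i: "i < n" "y $ i \<noteq> 0"
    and orth: "\<And>j. j < m \<Longrightarrow> y \<bullet> col A j = 0"
  shows "rank A < n"
proof (rule ccontr)
  assume "\<not> rank A < n"
  obtain S where S: "maximal S (\<lambda>T. T \<subseteq> set (cols A) \<and> lin_indpt T)" "finite S"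
    using maxS_exists[OF A] by blast
  have rk: "rank A = card S" using rank_card_indpt[OF A S(1)] .
  have Sc: "S \<subseteq> set (cols A)" "lin_indpt S" using S(1) unfolding maximal_def by auto
  have colsC: "set (cols A) \<subseteq> carrier_vec n" using A cols_dim by blast
  have SC: "S \<subseteq> carrier_vec n" using Sc colsC by auto
  have "basis S"
    by (rule dim_li_is_basis) (use S SC Sc \<open>\<not> rank A < n\<close> rk dim_is_n in auto)
  then have "span S = carrier V" unfolding basis_def by auto
  then have "unit_vec n i \<in> span (set (cols A))"
    using span_is_monotone[OF Sc(1)] i by auto
  moreover have "y \<in> orthogonal_complement (set (cols A))"
    unfolding orthogonal_complement_def using y orth A
    by (auto simp: cols_def)
  ultimately have "y \<bullet> unit_vec n i = 0"
    using in_orthogonal_complement_span[OF colsC] unfolding orthogonal_complement_def by auto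
  then show False using i y by simp
qed

lemma (in vec_space) LA2:
  assumes A: "A \<in> carrier_mat n m" and rk: "rank A < n"
  obtains y i where "y \<in> carrier_vec n" "i < n" "y $ i \<noteq> 0"
    "\<And>j. j < m \<Longrightarrow> y \<bullet> col A j = 0"
proof -
  obtain S where S: "maximal S (\<lambda>T. T \<subseteq> set (cols A) \<and> lin_indpt T)" "finite S"
    using maxS_exists[OF A] by blast
  have rkS: "rank A = card S" using rank_card_indpt[OF A S(1)] .
  have Sc: "S \<subseteq> set (cols A)" "lin_indpt S" using S(1) unfolding maximal_def by auto
  have colsC: "set (cols A) \<subseteq> carrier_vec n" using A cols_dim by blast
  have SC: "S \<subseteq> carrier_vec n" using Sc colsC by auto
  have colsS: "set (cols A) \<subseteq> span S"
  proof
    fix s assume s: "s \<in> set (cols A)"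
    show "s \<in> span S"
    proof (rule ccontr)
      assume ns: "s \<notin> span S"
      have sS: "s \<notin> S" using ns in_own_span[OF SC] by auto
      have "lin_indpt (S \<union> {s})"
        using lin_dep_iff_in_span[OF SC Sc(2) _ sS] ns s colsC by auto
      then have "S \<union> {s} = S" using S(1) s Sc unfolding maximal_def by blast
      then show False using sS by auto
    qed
  qed
  obtain ss where ss: "set ss = S" "distinct ss" using finite_distinct_list[OF S(2)] by blast
  define r where "r = length ss"
  have rn: "r < n" using rk rkS ss distinct_card r_def by metis
  define B where "B = mat_of_rows n ss"
  have B: "B \<in> carrier_mat r n" unfolding B_def r_def by simp
  have ssC: "\<And>k. k < r \<Longrightarrow> ss ! k \<in> carrier_vec n" using SC ss r_def by auto
  have "\<exists>y. y \<in> carrier_vec n \<and> y \<noteq> 0\<^sub>v n \<and> B *\<^sub>v y = 0\<^sub>v r"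
  proof (cases "distinct (cols B)")
    case True
    interpret R: vec_space "TYPE('a)" r .
    have cC: "set (cols B) \<subseteq> carrier_vec r" using B cols_dim by blast
    have "R.lin_dep (set (cols B))"
    proof (rule ccontr)
      assume li: "\<not> R.lin_dep (set (cols B))"
      have "card (set (cols B)) \<le> r"
        using R.li_le_dim(2)[OF R.fin_dim _ li] cC R.dim_is_n by auto
      moreover have "card (set (cols B)) = n" using True distinct_card B by fastforce
      ultimately show False using rn by auto
    qed
    from R.lin_depE[OF B this True] show ?thesis by blast
  next
    case False
    then obtain i j where ij: "i < n" "j < n" "i \<noteq> j" "col B i = col B j"
      using B unfolding distinct_conv_nth by auto
    define y :: "'a vec" where "y = unit_vec n i - unit_vec n j"
    have "B *\<^sub>v y = 0\<^sub>v r"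
    proof (rule eq_vecI)
      fix k assume k: "k < dim_vec (0\<^sub>v r :: 'a vec)"
      have dB: "dim_row B = r" "dim_col B = n" using B by auto
      have "B $$ (k, i) = col B i $ k" using ij(1) k dB by simp
      also have "\<dots> = col B j $ k" using ij(4) by simp
      also have "\<dots> = B $$ (k, j)" using ij(2) k dB by simp
      finally have "B $$ (k, i) = B $$ (k, j)" .
      then show "(B *\<^sub>v y) $ k = 0\<^sub>v r $ k"
        using k B ij unfolding y_def by (simp add: scalar_prod_minus_distrib row_def)
    qed (use B in simp)
    moreover have "y $ i \<noteq> 0" using ij unfolding y_def by simp
    moreover have "y \<in> carrier_vec n" unfolding y_def by simp
    moreover have "y \<noteq> 0\<^sub>v n" using \<open>y $ i \<noteq> 0\<close> ij by auto
    ultimately show ?thesis by blast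
  qed
  then obtain y where y: "y \<in> carrier_vec n" "y \<noteq> 0\<^sub>v n" "B *\<^sub>v y = 0\<^sub>v r" by blast
  then obtain i where i: "i < n" "y $ i \<noteq> 0" by (metis carrier_vecD eq_vecI index_zero_vec(1,2))
  have "y \<in> orthogonal_complement S"
    unfolding orthogonal_complement_def
  proof (intro CollectI conjI ballI)
    fix s assume "s \<in> S"
    then obtain k where k: "k < r" "s = ss ! k" using ss r_def by (metis in_set_conv_nth)
    have "(B *\<^sub>v y) $ k = 0" using y k by simp
    then have "ss ! k \<bullet> y = 0" using k B ssC unfolding B_def by (simp add: r_def)
    then show "y \<bullet> s = 0" using k ssC y comm_scalar_prod by metis
  qed (use y in auto)
  then have "y \<in> orthogonal_complement (set (cols A))"
    using in_orthogonal_complement_span[OF SC] orthogonal_complement_subset[OF colsS] by auto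
  then have "\<And>j. j < m \<Longrightarrow> y \<bullet> col A j = 0"
    unfolding orthogonal_complement_def using A by (auto simp: cols_def)
  then show ?thesis using that y i by blast
qed

lemma edge_eq:
  fixes \<alpha> :: "nat \<Rightarrow> 'a::field"
  assumes e: "e < nE" and s: "src e < nV" and t: "tgt e < nV" and y: "y \<in> carrier_vec nV"
  shows "y \<bullet> col (pi_alpha nV nE \<alpha> (A_Gamma src tgt)) e =
    (if src e = tgt e then y $ src e else y $ src e + \<alpha> e * y $ tgt e)"
proof -
  have c: "col (pi_alpha nV nE \<alpha> (A_Gamma src tgt)) e = vec nV (\<lambda>v. A_Gamma src tgt v e (\<alpha> e))"
    using e unfolding pi_alpha_def by simp
  have "y \<bullet> col (pi_alpha nV nE \<alpha> (A_Gamma src tgt)) e =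
     (\<Sum>v\<in>{0..<nV}. y $ v * A_Gamma src tgt v e (\<alpha> e))"
    unfolding c scalar_prod_def by simp
  also have "\<dots> = (\<Sum>v\<in>{0..<nV}. (if v = src e then y $ src e else 0) +
      (if v = tgt e then (if src e = tgt e then 0 else \<alpha> e * y $ tgt e) else 0))"
    by (rule sum.cong) (auto simp: A_Gamma_def)
  also have "\<dots> = (if src e = tgt e then y $ src e else y $ src e + \<alpha> e * y $ tgt e)"
    unfolding sum.distrib using s t by (simp add: sum.delta)
  finally show ?thesis .
qed

theorem mainTheorem1:
  fixes nV nE :: nat and src tgt :: "nat \<Rightarrow> nat"
  assumes "card (UNIV :: 'a set) \<ge> 4"
    and "graph_ok nV nE src tgt"
    and "graph_connected nV nE src tgt"
    and "nV \<le> nE"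
  shows "F_colorable TYPE('a) nV nE src tgt \<longleftrightarrow>
    (\<exists>\<alpha> :: nat \<Rightarrow> 'a::{finite,field}. (\<forall>e<nE. \<alpha> e \<noteq> 0 \<and> \<alpha> e \<noteq> -1) \<and>
       vec_space.rank nV (pi_alpha nV nE \<alpha> (A_Gamma src tgt)) < min nE nV)"
proof -
  have ok: "\<And>e. e < nE \<Longrightarrow> src e < nV \<and> tgt e < nV" using assms(2) unfolding graph_ok_def by auto
  have nV: "0 < nV" and conn: "\<And>u v. u < nV \<Longrightarrow> v < nV \<Longrightarrow> (adjacent nE src tgt)\<^sup>*\<^sup>* u v"
    using assms(3) unfolding graph_connected_def by auto
  have mn: "min nE nV = nV" using assms(4) by simp
  have car: "\<And>\<alpha>. pi_alpha nV nE \<alpha> (A_Gamma src tgt) \<in> carrier_mat nV nE"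
    unfolding pi_alpha_def by simp
  show ?thesis
  proof
    assume "F_colorable TYPE('a) nV nE src tgt"
    then obtain cl :: "nat \<Rightarrow> 'a" where cl0: "\<And>v. v < nV \<Longrightarrow> cl v \<noteq> 0"
      and cla: "\<And>u v. u < nV \<Longrightarrow> v < nV \<Longrightarrow> adjacent nE src tgt u v \<Longrightarrow> cl u \<noteq> cl v"
      unfolding F_colorable_def by blast
    define \<alpha> where "\<alpha> e = - cl (src e) / cl (tgt e)" for e
    have ne: "cl (src e) \<noteq> cl (tgt e)" if "e < nE" for e
      using cla[of "src e" "tgt e"] ok[OF that] that unfolding adjacent_def by blast
    have al: "\<alpha> e \<noteq> 0 \<and> \<alpha> e \<noteq> -1" if "e < nE" for e
    proof -
      have "cl (src e) \<noteq> 0" "cl (tgt e) \<noteq> 0" using cl0 ok[OF that] by auto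
      then show ?thesis using ne[OF that] unfolding \<alpha>_def by (auto simp: field_simps)
    qed
    define y where "y = vec nV cl"
    have "vec_space.rank nV (pi_alpha nV nE \<alpha> (A_Gamma src tgt)) < nV"
    proof (rule vec_space.LA1[OF car])
      show "y \<in> carrier_vec nV" unfolding y_def by simp
      show "0 < nV" by fact
      show "y $ 0 \<noteq> 0" using nV cl0 unfolding y_def by simp
      fix e assume e: "e < nE"
      have "src e \<noteq> tgt e" using ne[OF e] by auto
      moreover have "cl (tgt e) \<noteq> 0" using cl0 ok[OF e] by auto
      ultimately show "y \<bullet> col (pi_alpha nV nE \<alpha> (A_Gamma src tgt)) e = 0"
        using edge_eq[OF e _ _ \<open>y \<in> carrier_vec nV\<close>, of src tgt \<alpha>] ok[OF e] ne[OF e]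
        unfolding y_def \<alpha>_def by simp
    qed
    then show "\<exists>\<alpha> :: nat \<Rightarrow> 'a. (\<forall>e<nE. \<alpha> e \<noteq> 0 \<and> \<alpha> e \<noteq> -1) \<and>
       vec_space.rank nV (pi_alpha nV nE \<alpha> (A_Gamma src tgt)) < min nE nV"
      using al mn by auto
  next
    assume "\<exists>\<alpha> :: nat \<Rightarrow> 'a. (\<forall>e<nE. \<alpha> e \<noteq> 0 \<and> \<alpha> e \<noteq> -1) \<and>
       vec_space.rank nV (pi_alpha nV nE \<alpha> (A_Gamma src tgt)) < min nE nV"
    then obtain \<alpha> :: "nat \<Rightarrow> 'a" where al: "\<And>e. e < nE \<Longrightarrow> \<alpha> e \<noteq> 0 \<and> \<alpha> e \<noteq> -1"
      and rk: "vec_space.rank nV (pi_alpha nV nE \<alpha> (A_Gamma src tgt)) < nV" using mn by auto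
    obtain y i where y: "y \<in> carrier_vec nV" "i < nV" "y $ i \<noteq> 0"
      and orth: "\<And>j. j < nE \<Longrightarrow> y \<bullet> col (pi_alpha nV nE \<alpha> (A_Gamma src tgt)) j = 0"
      using vec_space.LA2[OF car rk] by metis
    have eq: "(if src e = tgt e then y $ src e else y $ src e + \<alpha> e * y $ tgt e) = 0" if "e < nE" for e
      using orth[OF that] edge_eq[OF that _ _ y(1), of src tgt \<alpha>] ok[OF that] by simp
    have step: "y $ v \<noteq> 0" if adj: "adjacent nE src tgt u v" and yu: "y $ u \<noteq> 0" for u v
    proof -
      obtain e where e: "e < nE" "(src e = u \<and> tgt e = v) \<or> (src e = v \<and> tgt e = u)"
        using adj unfolding adjacent_def by blast
      show ?thesis
      proof (cases "src e = tgt e")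
        case True then show ?thesis using eq[OF e(1)] e yu by auto
      next
        case False
        then have "y $ src e = - (\<alpha> e * y $ tgt e)" using eq[OF e(1)] by (simp add: eq_neg_iff_add_eq_0)
        then show ?thesis using e yu al[OF e(1)] by auto
      qed
    qed
    have nz: "y $ v \<noteq> 0" if "v < nV" for v
    proof -
      have "(adjacent nE src tgt)\<^sup>*\<^sup>* i v" using conn[OF y(2) that] .
      then show ?thesis
        by (induction rule: rtranclp_induct) (use y(3) step in auto)
    qed
    show "F_colorable TYPE('a) nV nE src tgt"
      unfolding F_colorable_def
    proof (intro exI[of _ "\<lambda>v. y $ v"] conjI allI impI)
      fix v assume "v < nV" then show "y $ v \<noteq> 0" by (rule nz)
    next
      fix u v assume uv: "u < nV" "v < nV" "adjacent nE src tgt u v"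
      obtain e where e: "e < nE" "(src e = u \<and> tgt e = v) \<or> (src e = v \<and> tgt e = u)"
        using uv(3) unfolding adjacent_def by blast
      have ns: "y $ src e \<noteq> 0" "y $ tgt e \<noteq> 0" using nz ok[OF e(1)] by auto
      have "y $ src e \<noteq> y $ tgt e"
      proof (cases "src e = tgt e")
        case True then show ?thesis using eq[OF e(1)] ns by auto
      next
        case False
        then have h: "y $ src e + \<alpha> e * y $ tgt e = 0" using eq[OF e(1)] by simp
        show ?thesis
        proof
          assume "y $ src e = y $ tgt e"
          then have "(1 + \<alpha> e) * y $ tgt e = 0" using h by (simp add: algebra_simps)
          then have "1 + \<alpha> e = 0" using ns by simp
          then have "\<alpha> e = -1" by (simp add: add_eq_0_iff)
          then show False using al[OF e(1)] by simp
        qed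
      qed
      then show "y $ u \<noteq> y $ v" using e(2) by auto
    qed
  qed
qed

end
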